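(* Let $(B,\lfloor\cdot,\cdot\rfloor)$ be an SSD space with quadratic form $q$, and let $A\subset B$ be a $q$-positive set. If $A$ is contained in more than one maximally $q$-positive set, then the family of maximally $q$-positive sets containing $A$ has at least the cardinality of the continuum.
   Context: An SSD space is a pair $(B,\lfloor\cdot,\cdot\rfloor)$ with $B$ a nonzero real vector space and $\lfloor\cdot,\cdot\rfloor$ a symmetric bilinear form on $B$; $q(b)=\frac12\lfloor b,b\rfloor$. A nonempty $A\subset B$ is $q$-positive if $q(b-c)\ge0$ for all $b,c\in A$; it is maximally $q$-positive if it is $q$-positive and not properly contained in another $q$-positive set. *)

theory Defs
  imports "HOL-Analysis.Analysis"
begin

definition SSD_space :: "('a::real_vector \<Rightarrow> 'a \<Rightarrow> real) \<Rightarrow> bool" where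
  "SSD_space s \<longleftrightarrow> (\<exists>b::'a. b \<noteq> 0) \<and> bilinear s \<and> (\<forall>b c. s b c = s c b)"

definition qform :: "('a \<Rightarrow> 'a \<Rightarrow> real) \<Rightarrow> 'a \<Rightarrow> real" where
  "qform s b = s b b / 2"

definition q_positive :: "('a::real_vector \<Rightarrow> 'a \<Rightarrow> real) \<Rightarrow> 'a set \<Rightarrow> bool" where
  "q_positive s A \<longleftrightarrow> A \<noteq> {} \<and> (\<forall>b\<in>A. \<forall>c\<in>A. qform s (b - c) \<ge> 0)"

definition max_q_positive :: "('a::real_vector \<Rightarrow> 'a \<Rightarrow> real) \<Rightarrow> 'a set \<Rightarrow> bool" where
  "max_q_positive s A \<longleftrightarrow> q_positive s A \<and> (\<forall>A'. q_positive s A' \<and> A \<subseteq> A' \<longrightarrow> A' = A)"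

end

theory Submission
  imports Defs
begin

lemma extend_max:
  assumes "q_positive s Y"
  shows "\<exists>M. max_q_positive s M \<and> Y \<subseteq> M"
proof -
  let ?F = "{X. q_positive s X \<and> Y \<subseteq> X}"
  have "\<exists>M\<in>?F. \<forall>X\<in>?F. M \<subseteq> X \<longrightarrow> X = M"
  proof (rule subset_Zorn_nonempty)
    show "?F \<noteq> {}" using assms by blast
  next
    fix C assume ne: "C \<noteq> {}" and ch: "subset.chain ?F C"
    hence sub: "C \<subseteq> ?F" and tot: "\<forall>X\<in>C. \<forall>Z\<in>C. X \<subseteq> Z \<or> Z \<subseteq> X"
      by (auto simp: subset_chain_def)
    obtain X0 where X0: "X0 \<in> C" using ne by blast
    have "Y \<subseteq> \<Union>C" using X0 sub by blast
    moreover have "\<Union>C \<noteq> {}" using X0 sub unfolding q_positive_def by blast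
    moreover have "\<forall>b\<in>\<Union>C. \<forall>c\<in>\<Union>C. qform s (b - c) \<ge> 0"
    proof (intro ballI)
      fix b c assume "b \<in> \<Union>C" "c \<in> \<Union>C"
      then obtain X Z where "X \<in> C" "Z \<in> C" "b \<in> X" "c \<in> Z" by blast
      then obtain W where W: "W \<in> C" "b \<in> W" "c \<in> W" using tot by blast
      hence "q_positive s W" using sub by blast
      thus "qform s (b - c) \<ge> 0" using W unfolding q_positive_def by blast
    qed
    ultimately show "\<Union>C \<in> ?F" by (auto simp: q_positive_def)
  qed
  then obtain M where MF: "M \<in> ?F" and mx: "\<forall>X\<in>?F. M \<subseteq> X \<longrightarrow> X = M" by (rule bexE)
  have M: "q_positive s M" "Y \<subseteq> M" using MF by auto
  have "\<forall>A'. q_positive s A' \<and> M \<subseteq> A' \<longrightarrow> A' = M"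
  proof (intro allI impI)
    fix A' assume h: "q_positive s A' \<and> M \<subseteq> A'"
    hence "A' \<in> ?F" using M(2) by auto
    thus "A' = M" using mx h by blast
  qed
  hence "max_q_positive s M" unfolding max_q_positive_def using M by blast
  thus ?thesis using M by blast
qed

lemma quad_expand:
  fixes s :: "'a::real_vector \<Rightarrow> 'a \<Rightarrow> real"
  assumes bl: "bilinear s" and sy: "\<forall>b c. s b c = s c b"
  shows "s (\<alpha> *\<^sub>R u + \<beta> *\<^sub>R v) (\<alpha> *\<^sub>R u + \<beta> *\<^sub>R v)
     = \<alpha>^2 * s u u + 2 * \<alpha> * \<beta> * s u v + \<beta>^2 * s v v"
proof -
  have "s v u = s u v" using sy by blast
  thus ?thesis
    by (simp add: bilinear_ladd[OF bl] bilinear_radd[OF bl] bilinear_lmul[OF bl]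
        bilinear_rmul[OF bl] power2_eq_square algebra_simps)
qed

lemma quad_sub:
  fixes s :: "'a::real_vector \<Rightarrow> 'a \<Rightarrow> real"
  assumes bl: "bilinear s" and sy: "\<forall>b c. s b c = s c b"
  shows "s (u - v) (u - v) = s u u - 2 * s u v + s v v"
proof -
  have "s v u = s u v" using sy by blast
  thus ?thesis
    by (simp add: bilinear_lsub[OF bl] bilinear_rsub[OF bl] algebra_simps)
qed

theorem mainTheorem2:
  fixes s :: "'a::real_vector \<Rightarrow> 'a \<Rightarrow> real" and A :: "'a set"
  assumes "SSD_space s"
    and "q_positive s A"
    and "\<exists>M1 M2. M1 \<noteq> M2 \<and> max_q_positive s M1 \<and> A \<subseteq> M1 \<and> max_q_positive s M2 \<and> A \<subseteq> M2"
  shows "\<exists>f :: real \<Rightarrow> 'a set. inj f \<and> range f \<subseteq> {M. max_q_positive s M \<and> A \<subseteq> M}"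
proof -
  have bl: "bilinear s" and sy: "\<forall>b c. s b c = s c b" using assms(1) by (auto simp: SSD_space_def)
  obtain M1 M2 where M: "M1 \<noteq> M2" "max_q_positive s M1" "A \<subseteq> M1" "max_q_positive s M2" "A \<subseteq> M2"
    using assms(3) by blast
  have "\<not> q_positive s (M1 \<union> M2)"
  proof
    assume "q_positive s (M1 \<union> M2)"
    hence "M1 \<union> M2 = M1" "M1 \<union> M2 = M2" using M unfolding max_q_positive_def by auto
    thus False using M(1) by simp
  qed
  moreover have "M1 \<union> M2 \<noteq> {}" using M(2) by (auto simp: max_q_positive_def q_positive_def)
  ultimately have "\<exists>x\<in>M1 \<union> M2. \<exists>y\<in>M1 \<union> M2. \<not> qform s (x - y) \<ge> 0"
    unfolding q_positive_def by blast
  then obtain x y where xy: "x \<in> M1 \<union> M2" "y \<in> M1 \<union> M2" "qform s (x - y) < 0"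
    by (auto simp: not_le)
  have P1: "\<forall>b\<in>M1. \<forall>c\<in>M1. qform s (b - c) \<ge> 0" and P2: "\<forall>b\<in>M2. \<forall>c\<in>M2. qform s (b - c) \<ge> 0"
    using M by (auto simp: max_q_positive_def q_positive_def)
  have symq: "s (y - x) (y - x) = s (x - y) (x - y)"
    using quad_sub[OF bl sy, of y x] quad_sub[OF bl sy, of x y] sy by simp
  have neg: "s (x - y) (x - y) < 0" using xy(3) unfolding qform_def by simp
  obtain b c where bc: "b \<in> M1" "c \<in> M2" "s (b - c) (b - c) < 0"
  proof (cases "x \<in> M1")
    case True
    hence "y \<notin> M1" using P1 xy(3) by force
    hence "y \<in> M2" using xy(2) by blast
    thus ?thesis using that True neg by blast
  next
    case False
    hence "x \<in> M2" using xy(1) by blast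
    hence "y \<notin> M2" using P2 xy(3) by force
    hence "y \<in> M1" using xy(2) by blast
    thus ?thesis using that \<open>x \<in> M2\<close> neg symq by simp
  qed
  have A1: "\<forall>a\<in>A. s (b - a) (b - a) \<ge> 0" using P1 bc M(3) by (auto simp: qform_def)
  have A2: "\<forall>a\<in>A. s (c - a) (c - a) \<ge> 0" using P2 bc M(5) by (auto simp: qform_def)
  define g :: "real \<Rightarrow> real" where "g t = exp t / (1 + exp t)" for t
  have g01: "0 \<le> g t \<and> g t \<le> 1" for t
    unfolding g_def by (simp add: add_pos_pos less_imp_le)
  have ginj: "inj g"
  proof (rule injI)
    fix t u assume "g t = g u"
    moreover have "1 + exp t \<noteq> 0" "1 + exp u \<noteq> 0" by (smt (verit) exp_gt_zero)+
    ultimately have "exp t * (1 + exp u) = exp u * (1 + exp t)" unfolding g_def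
      by (simp add: frac_eq_eq)
    hence "exp t = exp u" by (simp add: algebra_simps)
    thus "t = u" by simp
  qed
  define x where "x t = (1 - g t) *\<^sub>R b + g t *\<^sub>R c" for t
  have Y: "q_positive s (insert (x t) A)" for t
  proof -
    have key: "s (x t - a) (x t - a) \<ge> 0" if "a \<in> A" for a
    proof -
      let ?u = "b - a" and ?v = "c - a"
      have e: "x t - a = (1 - g t) *\<^sub>R ?u + g t *\<^sub>R ?v"
        unfolding x_def by (simp add: scaleR_diff_right scaleR_diff_left)
      have d: "(b - a) - (c - a) = b - c" by simp
      have "s ?u ?u - 2 * s ?u ?v + s ?v ?v < 0"
        using bc(3) quad_sub[OF bl sy, of ?u ?v] unfolding d by linarith
      moreover have "s ?u ?u \<ge> 0" "s ?v ?v \<ge> 0" using A1 A2 that by auto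
      ultimately have W: "s ?u ?v \<ge> 0" by linarith
      have "s (x t - a) (x t - a) = (1 - g t)^2 * s ?u ?u + 2 * (1 - g t) * g t * s ?u ?v + (g t)^2 * s ?v ?v"
        unfolding e by (rule quad_expand[OF bl sy])
      also have "\<dots> \<ge> 0" using W A1 A2 that g01[of t] by (intro add_nonneg_nonneg mult_nonneg_nonneg) auto
      finally show ?thesis .
    qed
    have sym0: "s (a - x t) (a - x t) = s (x t - a) (x t - a)" for a
      using quad_sub[OF bl sy, of a "x t"] quad_sub[OF bl sy, of "x t" a] sy by simp
    have z: "s (x t - x t) (x t - x t) = 0" using bilinear_lzero[OF bl] by simp
    have "\<forall>p\<in>insert (x t) A. \<forall>r\<in>insert (x t) A. s (p - r) (p - r) \<ge> 0"
    proof (intro ballI)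
      fix p r assume "p \<in> insert (x t) A" "r \<in> insert (x t) A"
      then consider "p = x t" "r = x t" | "p = x t" "r \<in> A" | "p \<in> A" "r = x t" | "p \<in> A" "r \<in> A"
        by blast
      thus "s (p - r) (p - r) \<ge> 0"
      proof cases
        case 1 thus ?thesis using z by simp
      next
        case 2 thus ?thesis using key by simp
      next
        case 3 thus ?thesis using key sym0 by simp
      next
        case 4 thus ?thesis using assms(2) unfolding q_positive_def qform_def by auto
      qed
    qed
    thus ?thesis unfolding q_positive_def qform_def by auto
  qed
  have "\<forall>t. \<exists>M. max_q_positive s M \<and> insert (x t) A \<subseteq> M" using extend_max Y by blast
  then obtain f where f: "\<And>t. max_q_positive s (f t) \<and> insert (x t) A \<subseteq> f t" by metis
  have "inj f"
  proof (rule injI)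
    fix t u assume eq: "f t = f u"
    show "t = u"
    proof (rule ccontr)
      assume "t \<noteq> u"
      hence ne: "g t \<noteq> g u" using ginj by (auto dest: injD)
      have "x t \<in> f t" "x u \<in> f t" using f[of t] f[of u] eq by auto
      hence "qform s (x t - x u) \<ge> 0" using f[of t] by (auto simp: max_q_positive_def q_positive_def)
      moreover have "x t - x u = (g u - g t) *\<^sub>R (b - c)"
        unfolding x_def by (simp add: scaleR_diff_right scaleR_diff_left)
      moreover have "s ((g u - g t) *\<^sub>R (b - c)) ((g u - g t) *\<^sub>R (b - c)) = (g u - g t)^2 * s (b - c) (b - c)"
        by (simp add: bilinear_lmul[OF bl] bilinear_rmul[OF bl] power2_eq_square)
      moreover have "(g u - g t)^2 > 0" using ne by simp
      ultimately have "(g u - g t)^2 * s (b - c) (b - c) \<ge> 0" unfolding qform_def by simp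
      moreover have "(g u - g t)^2 * s (b - c) (b - c) < 0"
        using \<open>(g u - g t)^2 > 0\<close> bc(3) by (simp add: mult_pos_neg)
      ultimately show False by simp
    qed
  qed
  moreover have "range f \<subseteq> {M. max_q_positive s M \<and> A \<subseteq> M}"
  proof
    fix M assume "M \<in> range f"
    then obtain t where "M = f t" by blast
    thus "M \<in> {M. max_q_positive s M \<and> A \<subseteq> M}" using f[of t] by blast
  qed
  ultimately show ?thesis by blast
qed

end
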